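(* Let $u\in\mathrm{BMO}(\mathbb R)$ be complex-valued and let $\varphi:\mathbb R\to\mathbb C$ satisfy $|\varphi(x)|\le Ce^{-|x|}$ for some $C>0$ and $\int_{\mathbb R}\varphi(x)dx=1$. Then there is a constant $K\ge1$, which stays bounded as long as $\|u\|_*$ stays bounded (for fixed $\varphi$), such that for all $x\in\mathbb R$, $y>0$, $$K^{-1}\,|e^{u_{I(x,y)}}|\le|e^{(\varphi_y*u)(x)}|\le K\,|e^{u_{I(x,y)}}|.$$
   Context: $u_I=|I|^{-1}\int_Iu$, $\|u\|_*=\sup_I|I|^{-1}\int_I|u-u_I|$ over bounded intervals, $\mathrm{BMO}(\mathbb R)=\{\|u\|_*<\infty\}$. $\varphi_y(x)=y^{-1}\varphi(x/y)$, $I(x,y)=(x-y,x+y)$. *)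

theory Defs
  imports "HOL-Analysis.Analysis"
begin

definition avg :: "(real \<Rightarrow> complex) \<Rightarrow> real \<Rightarrow> real \<Rightarrow> complex" where
  "avg u a b = (LINT t:{a<..<b}|lborel. u t) / complex_of_real (b - a)"

definition mean_osc :: "(real \<Rightarrow> complex) \<Rightarrow> real \<Rightarrow> real \<Rightarrow> real" where
  "mean_osc u a b = (LINT t:{a<..<b}|lborel. cmod (u t - avg u a b)) / (b - a)"

definition in_BMO :: "(real \<Rightarrow> complex) \<Rightarrow> bool" where
  "in_BMO u \<longleftrightarrow> (\<forall>a b. a < b \<longrightarrow> set_integrable lborel {a<..<b} u)
      \<and> bdd_above {mean_osc u a b | a b. a < b}"

definition bmo_norm :: "(real \<Rightarrow> complex) \<Rightarrow> real" where
  "bmo_norm u = Sup {mean_osc u a b | a b. a < b}"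

definition dil :: "(real \<Rightarrow> complex) \<Rightarrow> real \<Rightarrow> real \<Rightarrow> complex" where
  "dil \<phi> y x = \<phi> (x / y) / complex_of_real y"

definition conv :: "(real \<Rightarrow> complex) \<Rightarrow> (real \<Rightarrow> complex) \<Rightarrow> real \<Rightarrow> complex" where
  "conv f u x = (LINT t|lborel. f (x - t) * u t)"

end

theory Submission
  imports Defs
begin


lemma bmo_meas:
  assumes "in_BMO u" shows "u \<in> borel_measurable lborel"
proof -
  have si: "set_integrable lborel {-real n - 1<..<real n + 1} u" for n
    using assms unfolding in_BMO_def by auto
  have m: "(\<lambda>t. indicator {-real n - 1<..<real n + 1} t *\<^sub>R u t) \<in> borel_measurable lborel" for n
    using borel_measurable_integrable[OF si[of n, unfolded set_integrable_def]] by simp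
  show ?thesis
  proof (rule borel_measurable_LIMSEQ_metric[OF m])
    fix t :: real
    obtain N where N: "\<bar>t\<bar> \<le> real N" using real_arch_simple by blast
    have "\<forall>n\<ge>N. indicator {-real n - 1<..<real n + 1} t *\<^sub>R u t = u t"
      using N by (auto simp: indicator_def)
    then show "(\<lambda>n. indicator {-real n - 1<..<real n + 1} t *\<^sub>R u t) \<longlonglongrightarrow> u t"
      by (intro tendsto_eventually) (auto simp: eventually_sequentially)
  qed
qed

lemma mo_le:
  assumes "in_BMO u" "a < b" shows "mean_osc u a b \<le> bmo_norm u"
  unfolding bmo_norm_def using assms unfolding in_BMO_def by (auto intro!: cSup_upper)

lemma mo_nonneg: "a < b \<Longrightarrow> 0 \<le> mean_osc u a b"
  unfolding mean_osc_def unfolding set_lebesgue_integral_def by (auto intro!: divide_nonneg_pos integral_nonneg)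

lemma ioo_fin: "emeasure lborel {a<..<b::real} < top"
  by (cases "a \<le> b") auto

lemma sint_const: "set_integrable lborel {a<..<b::real} (\<lambda>_. c::complex)"
  unfolding set_integrable_def
  by (intro integrable_scaleR_left integrable_real_indicator) (auto simp: ioo_fin)

lemma sint_osc:
  assumes "in_BMO u" "a < b"
  shows "set_integrable lborel {a<..<b} (\<lambda>t. cmod (u t - c))"
proof -
  have "set_integrable lborel {a<..<b} u" using assms unfolding in_BMO_def by auto
  then have "set_integrable lborel {a<..<b} (\<lambda>t. u t - c)"
    by (intro set_integral_diff sint_const)
  then show ?thesis by (rule set_integrable_norm)
qed

lemma avg_diff:
  assumes "in_BMO u" "a < b"
  shows "cmod (avg u a b - c) \<le> (LINT t:{a<..<b}|lborel. cmod (u t - c)) / (b - a)"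
proof -
  have si: "set_integrable lborel {a<..<b} u" using assms unfolding in_BMO_def by auto
  have cst: "(LINT t:{a<..<b}|lborel. c) = of_real (b - a) * c"
    using assms by (subst set_integral_const) (auto simp: emeasure_lborel_Ioo scaleR_conv_of_real)
  have "(LINT t:{a<..<b}|lborel. (u t - c)) = (LINT t:{a<..<b}|lborel. u t) - of_real (b-a) * c"
    using si sint_const[of a b c] by (simp add: set_integral_diff cst)
  also have "\<dots> = of_real (b - a) * (avg u a b - c)"
    using assms unfolding avg_def by (simp add: field_simps)
  finally have eq: "(LINT t:{a<..<b}|lborel. (u t - c)) = of_real (b - a) * (avg u a b - c)" .
  have "cmod (of_real (b - a) * (avg u a b - c)) \<le> (LINT t:{a<..<b}|lborel. cmod (u t - c))"
    unfolding eq[symmetric]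
    by (intro set_integral_norm_bound set_integral_diff si sint_const)
  then have "(b - a) * cmod (avg u a b - c) \<le> (LINT t:{a<..<b}|lborel. cmod (u t - c))"
    using assms by (simp add: norm_mult of_real_diff[symmetric] del: of_real_diff)
  then show ?thesis using assms by (simp add: field_simps)
qed

lemma osc_mono:
  assumes "in_BMO u" "a' \<le> a" "b \<le> b'" "a < b"
  shows "(LINT t:{a<..<b}|lborel. cmod (u t - c)) \<le> (LINT t:{a'<..<b'}|lborel. cmod (u t - c))"
proof -
  have i1: "set_integrable lborel {a<..<b} (\<lambda>t. cmod (u t - c))" using sint_osc assms by auto
  have i2: "set_integrable lborel {a'<..<b'} (\<lambda>t. cmod (u t - c))" using sint_osc assms by auto
  show ?thesis
    unfolding set_lebesgue_integral_def
    using i1 i2 assms unfolding set_integrable_def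
    by (intro integral_mono) (auto simp: indicator_def)
qed

lemma osc_tri:
  assumes "in_BMO u" "a < b"
  shows "(LINT t:{a<..<b}|lborel. cmod (u t - c)) \<le> (LINT t:{a<..<b}|lborel. cmod (u t - d)) + (b - a) * cmod (d - c)"
proof -
  have i1: "set_integrable lborel {a<..<b} (\<lambda>t. cmod (u t - c))" using sint_osc assms by auto
  have i2: "set_integrable lborel {a<..<b} (\<lambda>t. cmod (u t - d))" using sint_osc assms by auto
  have i3: "set_integrable lborel {a<..<b} (\<lambda>t. cmod (d - c))"
    unfolding set_integrable_def
    by (intro integrable_scaleR_left integrable_real_indicator) (auto simp: ioo_fin)
  have "(LINT t:{a<..<b}|lborel. cmod (u t - c)) \<le> (LINT t:{a<..<b}|lborel. cmod (u t - d) + cmod (d - c))"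
    using i1 i2 i3 
    by (intro set_integral_mono set_integral_add) (auto intro: order_trans[OF _ norm_triangle_ineq] simp: norm_triangle_sub)
  also have "\<dots> = (LINT t:{a<..<b}|lborel. cmod (u t - d)) + (b - a) * cmod (d - c)"
    using i2 i3 assms by (simp add: set_integral_add set_integral_const emeasure_lborel_Ioo)
  finally show ?thesis .
qed

lemma resc: "q \<noteq> 0 \<Longrightarrow> (L::real) / p = L / q * (q / p)"
  by (cases "p = 0") (auto simp: field_simps)

lemma avg_step:
  assumes u: "in_BMO u" and y: "y > 0"
  shows "cmod (avg u (x - (real (Suc k) + 1) * y) (x + (real (Suc k) + 1) * y)
             - avg u (x - (real k + 1) * y) (x + (real k + 1) * y)) \<le> 2 * bmo_norm u"
proof -
  define a where "a = x - (real k + 1) * y"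
  define b where "b = x + (real k + 1) * y"
  define a' where "a' = x - (real (Suc k) + 1) * y"
  define b' where "b' = x + (real (Suc k) + 1) * y"
  define c where "c = avg u a' b'"
  have ab: "a < b" "a' < b'" "a' \<le> a" "b \<le> b'" using y by (auto simp: a_def b_def a'_def b'_def)
  have "cmod (avg u a b - c) \<le> (LINT t:{a<..<b}|lborel. cmod (u t - c)) / (b - a)"
    by (rule avg_diff[OF u ab(1)])
  also have "\<dots> \<le> (LINT t:{a'<..<b'}|lborel. cmod (u t - c)) / (b - a)"
    using ab by (intro divide_right_mono osc_mono[OF u]) auto
  also have "\<dots> = mean_osc u a' b' * ((b' - a') / (b - a))"
  proof -
    have "b - a \<noteq> 0" "b' - a' \<noteq> 0" using ab by auto
    then show ?thesis unfolding mean_osc_def c_def by (rule_tac resc) simp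
  qed
  also have "\<dots> \<le> bmo_norm u * 2"
  proof (rule mult_mono)
    show "mean_osc u a' b' \<le> bmo_norm u" by (rule mo_le[OF u ab(2)])
    show "(b' - a') / (b - a) \<le> 2" using y ab by (simp add: a_def b_def a'_def b'_def field_simps)
    show "0 \<le> bmo_norm u" using mo_le[OF u ab(2)] mo_nonneg[OF ab(2), of u] by linarith
    show "0 \<le> (b' - a') / (b - a)" using ab by simp
  qed
  finally show ?thesis by (simp add: c_def a_def b_def a'_def b'_def norm_minus_commute mult.commute)
qed

lemma avg_drift:
  assumes u: "in_BMO u" and y: "y > 0"
  shows "cmod (avg u (x - (real k + 1) * y) (x + (real k + 1) * y) - avg u (x - y) (x + y)) \<le> 2 * real k * bmo_norm u"
proof (induction k)
  case 0
  then show ?case by simp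
next
  case (Suc k)
  have "cmod (avg u (x - (real (Suc k) + 1) * y) (x + (real (Suc k) + 1) * y) - avg u (x - y) (x + y))
     \<le> cmod (avg u (x - (real (Suc k) + 1) * y) (x + (real (Suc k) + 1) * y)
             - avg u (x - (real k + 1) * y) (x + (real k + 1) * y))
       + cmod (avg u (x - (real k + 1) * y) (x + (real k + 1) * y) - avg u (x - y) (x + y))"
    by (rule norm_diff_triangle_ineq[THEN order_trans[rotated]]) (simp add: algebra_simps)
  also have "\<dots> \<le> 2 * bmo_norm u + 2 * real k * bmo_norm u"
    using avg_step[OF u y, of x k] Suc by linarith
  finally show ?case by (simp add: algebra_simps)
qed

lemma annulus:
  assumes u: "in_BMO u" and y: "y > 0"
  shows "(LINT t:{x - (real k + 1) * y<..<x + (real k + 1) * y}|lborel. cmod (u t - avg u (x - y) (x + y)))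
         \<le> 2 * (real k + 1) * y * (1 + 2 * real k) * bmo_norm u"
proof -
  define a where "a = x - (real k + 1) * y"
  define b where "b = x + (real k + 1) * y"
  have ab: "a < b" using y by (auto simp: a_def b_def)
  have "(LINT t:{a<..<b}|lborel. cmod (u t - avg u (x - y) (x + y)))
     \<le> (LINT t:{a<..<b}|lborel. cmod (u t - avg u a b)) + (b - a) * cmod (avg u a b - avg u (x - y) (x + y))"
    by (rule osc_tri[OF u ab])
  also have "(LINT t:{a<..<b}|lborel. cmod (u t - avg u a b)) = (b - a) * mean_osc u a b"
    unfolding mean_osc_def using ab by simp
  also have "(b - a) * mean_osc u a b \<le> (b - a) * bmo_norm u"
    using ab mo_le[OF u ab] by simp
  also have "(b - a) * cmod (avg u a b - avg u (x - y) (x + y)) \<le> (b - a) * (2 * real k * bmo_norm u)"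
    using ab y avg_drift[OF u y, of x k] unfolding a_def b_def by (intro mult_left_mono) auto
  finally show ?thesis by (simp add: a_def b_def algebra_simps)
qed

lemma summable_s: "summable (\<lambda>k::nat. exp (- real k) * (2 * (real k + 1) * (1 + 2 * real k)))"
proof (rule summable_ratio_test[where c="3/4" and N=4])
  fix n :: nat assume n: "4 \<le> n"
  have e: "2 \<le> exp (1::real)" using exp_ge_add_one_self[of 1] by simp
  have p: "(real n + 2) * (2 * real n + 3) \<le> 3/2 * ((real n + 1) * (2 * real n + 1))"
  proof -
    have "real n \<ge> 4" using n by simp
    moreover have "0 \<le> (real n - 4) * (real n + 1)" using \<open>real n \<ge> 4\<close> by simp
    ultimately show ?thesis by (simp add: algebra_simps)
  qed
  have q: "0 \<le> (real n + 1) * (2 * real n + 1)" by simp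
  have "(real n + 2) * (2 * real n + 3) \<le> exp 1 * (3/4) * ((real n + 1) * (2 * real n + 1))"
    using p mult_right_mono[OF e q] by (simp add: algebra_simps)
  then have "exp (-1) * ((real n + 2) * (2 * real n + 3)) \<le> 3/4 * ((real n + 1) * (2 * real n + 1))"
    by (simp add: exp_minus field_simps)
  then have "exp (- real n) * (exp (-1) * ((real n + 2) * (2 * real n + 3))) \<le> exp (- real n) * (3/4 * ((real n + 1) * (2 * real n + 1)))"
    by (intro mult_left_mono) auto
  moreover have "exp (- real (Suc n)) = exp (- real n) * exp (-1)"
    by (simp add: exp_add[symmetric])
  ultimately show "norm (exp (- real (Suc n)) * (2 * (real (Suc n) + 1) * (1 + 2 * real (Suc n))))
        \<le> 3/4 * norm (exp (- real n) * (2 * (real n + 1) * (1 + 2 * real n)))"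
    by (simp add: abs_mult algebra_simps)
qed simp


theorem proposition3p3:
  fixes \<phi> :: "real \<Rightarrow> complex" and C :: real
  assumes meas: "\<phi> \<in> borel_measurable lborel"
    and C_pos: "C > 0"
    and decay: "\<And>x. cmod (\<phi> x) \<le> C * exp (- \<bar>x\<bar>)"
    and int1: "(LINT x|lborel. \<phi> x) = 1"
  shows "\<forall>B. \<exists>K\<ge>1. \<forall>u. in_BMO u \<and> bmo_norm u \<le> B \<longrightarrow>
           (\<forall>x. \<forall>y>0.
              cmod (exp (avg u (x - y) (x + y))) / K \<le> cmod (exp (conv (dil \<phi> y) u x))
            \<and> cmod (exp (conv (dil \<phi> y) u x)) \<le> K * cmod (exp (avg u (x - y) (x + y))))"
proof
  fix B :: real
  define s where "s = (\<lambda>k::nat. exp (- real k) * (2 * (real k + 1) * (1 + 2 * real k)))"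
  define S where "S = suminf s"
  have s_summ: "summable s" unfolding s_def by (rule summable_s)
  have s_nn: "\<And>k. 0 \<le> s k" unfolding s_def by simp
  have S_nn: "0 \<le> S" unfolding S_def by (rule suminf_nonneg[OF s_summ s_nn])
  define L where "L = C * S * max B 0"
  have L_nn: "0 \<le> L" unfolding L_def using C_pos S_nn by simp
  have phi_int: "integrable lborel \<phi>"
    using int1 not_integrable_integral_eq by fastforce
  show "\<exists>K\<ge>1. \<forall>u. in_BMO u \<and> bmo_norm u \<le> B \<longrightarrow>
           (\<forall>x. \<forall>y>0.
              cmod (exp (avg u (x - y) (x + y))) / K \<le> cmod (exp (conv (dil \<phi> y) u x))
            \<and> cmod (exp (conv (dil \<phi> y) u x)) \<le> K * cmod (exp (avg u (x - y) (x + y))))"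
  proof (intro exI[of _ "exp L"] conjI allI impI)
    show "1 \<le> exp L" using L_nn by simp
    fix u x and y :: real
    assume uB: "in_BMO u \<and> bmo_norm u \<le> B" and y: "y > 0"
    have u: "in_BMO u" using uB by simp
    have [measurable]: "u \<in> borel_measurable lborel" by (rule bmo_meas[OF u])
    note meas[measurable]
    define M where "M = bmo_norm u"
    have M_nn: "0 \<le> M" unfolding M_def
      using mo_le[OF u, of 0 1] mo_nonneg[of 0 1 u] by simp
    have M_le: "M \<le> max B 0" unfolding M_def using uB by (auto simp: le_max_iff_disj)
    define a0 where "a0 = avg u (x - y) (x + y)"
    define h where "h = (\<lambda>t. cmod (u t - a0))"
    define kk where "kk = (\<lambda>t. dil \<phi> y (x - t))"
    define g where "g = (\<lambda>t. kk t * (u t - a0))"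
    have kk_eq: "kk = (\<lambda>t. \<phi> (x / y + (- 1 / y) * t) / complex_of_real y)"
      unfolding kk_def dil_def using y by (auto simp: field_simps)
    have kk_int: "integrable lborel kk"
      unfolding kk_eq
      using lborel_integrable_real_affine_iff[of "- 1 / y" \<phi> "x / y"] y phi_int
      by (intro integrable_divide) auto
    have kk_1: "(LINT t|lborel. kk t) = 1"
    proof -
      have "(1::complex) = (LINT t|lborel. \<phi> t)" using int1 by simp
      also have "\<dots> = \<bar>- 1 / y\<bar> *\<^sub>R (LINT t|lborel. \<phi> (x / y + (- 1 / y) * t))"
        using y by (intro lborel_integral_real_affine) auto
      also have "\<dots> = (LINT t|lborel. kk t)"
        unfolding kk_eq using y by (simp add: scaleR_conv_of_real divide_simps)
      finally show ?thesis by simp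
    qed
    have kk_bound: "cmod (kk t) \<le> C / y * exp (- (\<bar>x - t\<bar> / y))" for t
    proof -
      have "cmod (kk t) = cmod (\<phi> ((x - t) / y)) / y"
        unfolding kk_def dil_def using y by (simp add: norm_divide)
      also have "\<dots> \<le> C * exp (- \<bar>(x - t) / y\<bar>) / y"
        using y decay[of "(x - t) / y"] by (intro divide_right_mono) auto
      finally show ?thesis using y by (simp add: abs_divide)
    qed
    have h_nn: "\<And>t. 0 \<le> h t" unfolding h_def by simp
    have [measurable]: "kk \<in> borel_measurable lborel" unfolding kk_def dil_def by measurable
    have [measurable]: "h \<in> borel_measurable lborel" unfolding h_def by measurable
    define c where "c = (\<lambda>k::nat. C / y * exp (- real k))"
    define Ik where "Ik = (\<lambda>k::nat. {x - (real k + 1) * y<..<x + (real k + 1) * y})"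
    have ptw: "ennreal (norm (g t)) \<le> (\<Sum>k. ennreal (c k * indicator (Ik k) t * h t))" for t
    proof -
      define k0 where "k0 = nat \<lfloor>\<bar>x - t\<bar> / y\<rfloor>"
      have q0: "0 \<le> \<bar>x - t\<bar> / y" using y by simp
      have fl: "real k0 = of_int \<lfloor>\<bar>x - t\<bar> / y\<rfloor>" unfolding k0_def using q0 by simp
      have k0a: "real k0 \<le> \<bar>x - t\<bar> / y" using fl floor_correct[of "\<bar>x - t\<bar> / y"] by linarith
      have k0b: "\<bar>x - t\<bar> / y < real k0 + 1" using fl floor_correct[of "\<bar>x - t\<bar> / y"] by simp
      have tin: "t \<in> Ik k0"
      proof -
        have "\<bar>x - t\<bar> < (real k0 + 1) * y" using k0b y by (simp add: field_simps)
        then show ?thesis unfolding Ik_def by (auto simp: abs_if split: if_splits)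
      qed
      have "norm (g t) = cmod (kk t) * h t" unfolding g_def h_def by (simp add: norm_mult)
      also have "\<dots> \<le> C / y * exp (- (\<bar>x - t\<bar> / y)) * h t"
        by (intro mult_right_mono kk_bound h_nn)
      also have "\<dots> \<le> c k0 * h t"
        unfolding c_def using y C_pos k0a h_nn by (intro mult_right_mono mult_left_mono) auto
      also have "\<dots> = c k0 * indicator (Ik k0) t * h t" using tin by simp
      finally have "ennreal (norm (g t)) \<le> ennreal (c k0 * indicator (Ik k0) t * h t)"
        by (rule ennreal_leI)
      also have "\<dots> = (\<Sum>k\<in>{k0}. ennreal (c k * indicator (Ik k) t * h t))" by simp
      also have "\<dots> \<le> (\<Sum>k. ennreal (c k * indicator (Ik k) t * h t))"
        by (rule sum_le_suminf) auto
      finally show ?thesis .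
    qed
    have termk: "(\<integral>\<^sup>+t. ennreal (c k * indicator (Ik k) t * h t) \<partial>lborel) \<le> ennreal (C * M * s k)" for k
    proof -
      have si: "set_integrable lborel (Ik k) h" unfolding Ik_def h_def
        by (rule sint_osc[OF u]) (use y in simp)
      then have ii: "integrable lborel (\<lambda>t. c k * (indicator (Ik k) t * h t))"
        unfolding set_integrable_def by (intro integrable_mult_right) simp
      have "(\<integral>\<^sup>+t. ennreal (c k * indicator (Ik k) t * h t) \<partial>lborel)
          = ennreal (LINT t|lborel. c k * (indicator (Ik k) t * h t))"
        using ii h_nn c_def y C_pos
        by (subst nn_integral_eq_integral[symmetric]) (auto simp: mult.assoc intro!: AE_I2)
      also have "(LINT t|lborel. c k * (indicator (Ik k) t * h t)) = c k * (LINT t:Ik k|lborel. h t)"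
        unfolding set_lebesgue_integral_def by simp
      also have "\<dots> \<le> c k * (2 * (real k + 1) * y * (1 + 2 * real k) * M)"
        unfolding Ik_def h_def a0_def M_def c_def using C_pos y
        by (intro mult_left_mono annulus[OF u y]) auto
      also have "\<dots> = C * M * s k" unfolding c_def s_def using y by (simp add: field_simps)
      finally show ?thesis by (meson ennreal_leI)
    qed
    have nnb: "(\<integral>\<^sup>+t. ennreal (norm (g t)) \<partial>lborel) \<le> ennreal (C * M * S)"
    proof -
      have "(\<integral>\<^sup>+t. ennreal (norm (g t)) \<partial>lborel) \<le> (\<integral>\<^sup>+t. (\<Sum>k. ennreal (c k * indicator (Ik k) t * h t)) \<partial>lborel)"
        by (intro nn_integral_mono ptw)
      also have "\<dots> = (\<Sum>k. (\<integral>\<^sup>+t. ennreal (c k * indicator (Ik k) t * h t) \<partial>lborel))"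
        by (rule nn_integral_suminf) (auto simp: Ik_def)
      also have "\<dots> \<le> (\<Sum>k. ennreal (C * M * s k))"
        by (intro suminf_le termk) auto
      also have "\<dots> = ennreal (\<Sum>k. C * M * s k)"
        using C_pos M_nn s_nn by (intro suminf_ennreal2 summable_mult s_summ) auto
      also have "(\<Sum>k. C * M * s k) = C * M * S"
        unfolding S_def by (rule suminf_mult[OF s_summ])
      finally show ?thesis .
    qed
    have g_int: "integrable lborel g"
      by (rule integrableI_bounded) (use nnb in \<open>auto simp: g_def top_unique ennreal_less_top intro: le_less_trans\<close>)
    have gb: "cmod (LINT t|lborel. g t) \<le> L"
    proof -
      have "cmod (LINT t|lborel. g t) \<le> (LINT t|lborel. norm (g t))" by (rule integral_norm_bound)
      also have "\<dots> \<le> C * M * S"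
      proof -
        have "ennreal (LINT t|lborel. norm (g t)) = (\<integral>\<^sup>+t. ennreal (norm (g t)) \<partial>lborel)"
          using g_int by (intro nn_integral_eq_integral[symmetric]) auto
        with nnb have "ennreal (LINT t|lborel. norm (g t)) \<le> ennreal (C * M * S)" by simp
        then show ?thesis using C_pos M_nn S_nn by (simp add: ennreal_le_iff)
      qed
      also have "\<dots> \<le> L"
      proof -
        have "M * S \<le> max B 0 * S" using S_nn M_le by (rule mult_right_mono[rotated])
        then show ?thesis unfolding L_def using C_pos by (simp add: mult.assoc mult.commute mult.left_commute)
      qed
      finally show ?thesis .
    qed
    have conv_eq: "conv (dil \<phi> y) u x = (LINT t|lborel. g t) + a0"
    proof -
      have "conv (dil \<phi> y) u x = (LINT t|lborel. g t + kk t * a0)"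
        unfolding conv_def g_def kk_def by (simp add: algebra_simps)
      also have "\<dots> = (LINT t|lborel. g t) + (LINT t|lborel. kk t * a0)"
        using g_int kk_int by (intro Bochner_Integration.integral_add integrable_mult_left) auto
      also have "(LINT t|lborel. kk t * a0) = a0" using kk_1 by simp
      finally show ?thesis .
    qed
    define D where "D = (LINT t|lborel. g t)"
    have ReD: "\<bar>Re D\<bar> \<le> L" using gb abs_Re_le_cmod[of D] unfolding D_def by linarith
    have Re_eq: "Re (conv (dil \<phi> y) u x) = Re a0 + Re D" using conv_eq unfolding D_def by simp
    show "cmod (exp (avg u (x - y) (x + y))) / exp L \<le> cmod (exp (conv (dil \<phi> y) u x))"
      unfolding norm_exp_eq_Re Re_eq a0_def[symmetric]
      using ReD by (simp add: exp_diff[symmetric])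
    show "cmod (exp (conv (dil \<phi> y) u x)) \<le> exp L * cmod (exp (avg u (x - y) (x + y)))"
      unfolding norm_exp_eq_Re Re_eq a0_def[symmetric]
      using ReD by (simp add: exp_add[symmetric])
  qed
qed

end
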